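(* Let $N\ge1$ and $L=\sum_{i=0}^N a_i(x)\partial_x^i$ with $a_i(x)=\sum_{j=0}^i a_{i,j}x^j$ complex polynomials, $a_0\equiv0$, $a_i\equiv0$ for $i>N$, and let $\delta_n^{(k)}=\sum_{i=k}^n\binom ni i!\,a_{i,i-k}$ ($0\le k\le n$). Suppose there are $\lambda_n\in\mathbb{C}$ ($n\ge0$, $\lambda_0=0$, $\lambda_n\notin\{0,\lambda_1,\ldots,\lambda_{n-1}\}$ for $n\ge1$) and monic polynomials $P_n(x)=\sum_{i=0}^nb_{n,i}x^i$ of degree $n$ with $\sum_{i=1}^Na_i\partial_x^iP_n=\lambda_nP_n$ for all $n\ge0$ (convention $b_{m,m}=1$, $b_{m,l}=0$ for $l>m$). Then for every $n\ge1$ and $k=1,\ldots,n$, $(-1)^k\delta_n^{(k)}$ equals the determinant of the $k\times k$ matrix $G$ with first row $G_{1,c}=(\lambda_{n-k}-\lambda_{n-k+c})\,b_{n-k+c,\,n-k}$ ($1\le c\le k$) and, for rows $2\le\rho\le k$, $G_{\rho,c}=b_{n-k+c,\;n-k+\rho-1}$.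
   Context: $\partial_x^i$ denotes the $i$-th derivative in $x$. With the stated convention, rows $2,\ldots,k$ of $G$ have ones on the subdiagonal and zeros below it. *)

theory Defs
  imports "HOL-Computational_Algebra.Polynomial" "Jordan_Normal_Form.Determinant"
begin

definition coeff_poly :: "(nat \<Rightarrow> nat \<Rightarrow> complex) \<Rightarrow> nat \<Rightarrow> complex poly" where
  "coeff_poly a i = (\<Sum>j\<le>i. monom (a i j) j)"

definition P_poly :: "(nat \<Rightarrow> nat \<Rightarrow> complex) \<Rightarrow> nat \<Rightarrow> complex poly" where
  "P_poly b n = (\<Sum>i\<le>n. monom (b n i) i)"

definition delta :: "(nat \<Rightarrow> nat \<Rightarrow> complex) \<Rightarrow> nat \<Rightarrow> nat \<Rightarrow> complex" where
  "delta a n k = (\<Sum>i=k..n. of_nat (n choose i) * fact i * a i (i - k))"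

text \<open>The k x k matrix G (0-indexed: row r, column c correspond to rho = r+1, c+1).\<close>
definition Gmat :: "(nat \<Rightarrow> complex) \<Rightarrow> (nat \<Rightarrow> nat \<Rightarrow> complex) \<Rightarrow> nat \<Rightarrow> nat \<Rightarrow> complex mat" where
  "Gmat lam b n k = mat k k (\<lambda>(r, c).
     if r = 0 then (lam (n - k) - lam (n - k + (c + 1))) * b (n - k + (c + 1)) (n - k)
     else b (n - k + (c + 1)) (n - k + r))"

end

theory Submission
  imports Defs
begin

lemma coeff_coeff_poly: "coeff (coeff_poly a i) l = (if l \<le> i then a i l else 0)"
  unfolding coeff_poly_def by (simp add: coeff_sum coeff_monom)

lemma coeff_P_poly: "coeff (P_poly b n) l = (if l \<le> n then b n l else 0)"
  unfolding P_poly_def by (simp add: coeff_sum coeff_monom)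

lemma hp_monom: "(pderiv ^^ i) (monom (c::complex) s) =
   (if i \<le> s then monom (c * fact s / fact (s - i)) (s - i) else 0)"
proof (induction i)
  case 0 then show ?case by simp
next
  case (Suc i)
  show ?case
  proof (cases "Suc i \<le> s")
    case True
    then have f: "fact (s - i) = (of_nat (s - i) :: complex) * fact (s - Suc i)"
      by (metis Suc_diff_le diff_Suc_Suc fact_Suc le_SucI le_imp_less_Suc less_Suc_eq_le minus_nat.diff_0 not_less_eq_eq Suc_diff_Suc )
    have "(of_nat (s - i) :: complex) \<noteq> 0" using True by simp
    then show ?thesis using True Suc f by (simp add: pderiv_monom field_simps)
  next
    case False
    then show ?thesis using Suc by (auto simp: pderiv_monom)
  qed
qed


lemma coeff_mult_monom': "coeff (p * monom c d) t = (if t < d then 0 else c * coeff p (t - d))"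
  by (subst mult.commute) (simp add: coeff_monom_mult)

lemma L_monom_coeff:
  fixes a :: "nat \<Rightarrow> nat \<Rightarrow> complex"
  assumes a0: "a 0 0 = 0" and aN: "\<And>i j. i > N \<Longrightarrow> j \<le> i \<Longrightarrow> a i j = 0"
  shows "coeff (\<Sum>i=1..N. coeff_poly a i * (pderiv ^^ i) (monom c s)) t
      = c * (if t \<le> s then delta a s (s - t) else 0)"
proof -
  define h where "h i = (if i \<le> s \<and> s \<le> t + i \<and> t \<le> s
      then c * fact s / fact (s - i) * a i (t + i - s) else 0)" for i
  have hterm: "coeff (coeff_poly a i * (pderiv ^^ i) (monom c s)) t = h i" for i
  proof (cases "i \<le> s")
    case True
    then show ?thesis
      by (auto simp: hp_monom coeff_mult_monom' coeff_coeff_poly h_def)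
  next
    case False
    then show ?thesis by (simp add: hp_monom h_def)
  qed
  have s1: "coeff (\<Sum>i=1..N. coeff_poly a i * (pderiv ^^ i) (monom c s)) t = (\<Sum>i=1..N. h i)"
    by (simp add: coeff_sum hterm)
  have s2: "(\<Sum>i=1..N. h i) = (\<Sum>i=0..N+s. h i)"
  proof (rule sum.mono_neutral_left)
    show "\<forall>i\<in>{0..N + s} - {1..N}. h i = 0"
    proof
      fix i assume "i \<in> {0..N + s} - {1..N}"
      then have "i = 0 \<or> i > N" by auto
      then show "h i = 0"
      proof
        assume "i = 0" then show ?thesis using a0 by (simp add: h_def)
      next
        assume "i > N" then show ?thesis using aN[of i "t + i - s"] by (simp add: h_def; linarith)
      qed
    qed
  qed auto
  have s3: "c * (if t \<le> s then delta a s (s - t) else 0) = (\<Sum>i=0..N+s. h i)"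
  proof (cases "t \<le> s")
    case False
    then show ?thesis by (simp add: h_def)
  next
    case True
    have "c * delta a s (s - t) = (\<Sum>i=s-t..s. h i)"
      unfolding delta_def sum_distrib_left
    proof (rule sum.cong[OF refl])
      fix i assume i: "i \<in> {s-t..s}"
      then have ii: "i \<le> s" "s \<le> t + i" by auto
      have "(of_nat (s choose i) :: complex) * fact i = fact s / fact (s - i)"
        using ii by (simp add: binomial_fact field_simps)
      moreover have "i - (s - t) = t + i - s" using ii True by auto
      ultimately show "c * (of_nat (s choose i) * fact i * a i (i - (s - t))) = h i"
        using ii True by (simp add: h_def)
    qed
    also have "\<dots> = (\<Sum>i=0..N+s. h i)"
      by (rule sum.mono_neutral_left) (auto simp: h_def)
    finally show ?thesis using True by simp
  qed
  show ?thesis using s1 s2 s3 by simp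
qed


lemma eig_coeff:
  fixes a b :: "nat \<Rightarrow> nat \<Rightarrow> complex"
  assumes a0: "a 0 0 = 0" and aN: "\<And>i j. i > N \<Longrightarrow> j \<le> i \<Longrightarrow> a i j = 0"
    and eig: "(\<Sum>i=1..N. coeff_poly a i * (pderiv ^^ i) (P_poly b n)) = smult l (P_poly b n)"
    and t: "t \<le> n"
  shows "(\<Sum>s\<le>n. b n s * (if t \<le> s then delta a s (s - t) else 0)) = l * b n t"
proof -
  have "(\<Sum>i=1..N. coeff_poly a i * (pderiv ^^ i) (P_poly b n))
     = (\<Sum>s\<le>n. (\<Sum>i=1..N. coeff_poly a i * (pderiv ^^ i) (monom (b n s) s)))"
    unfolding P_poly_def higher_pderiv_sum sum_distrib_left
    by (rule sum.swap)
  then have "coeff (\<Sum>i=1..N. coeff_poly a i * (pderiv ^^ i) (P_poly b n)) t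
     = (\<Sum>s\<le>n. b n s * (if t \<le> s then delta a s (s - t) else 0))"
    by (simp only: coeff_sum[of _ "{..n}"] L_monom_coeff[of a N, OF a0 aN])
  moreover have "coeff (\<Sum>i=1..N. coeff_poly a i * (pderiv ^^ i) (P_poly b n)) t = l * b n t"
    unfolding eig using t by (simp add: coeff_P_poly)
  ultimately show ?thesis by simp
qed

lemma prod_list_ones: "(\<forall>x\<in>set xs. x = 1) \<Longrightarrow> prod_list xs = (1::'a::monoid_mult)"
  by (induction xs) auto

lemma det_combo:
  fixes A :: "'a::comm_ring_1 mat"
  assumes A: "A \<in> carrier_mat k k" and k: "0 < k"
    and row0: "\<And>j. j < k \<Longrightarrow> A $$ (0,j) = (\<Sum>r\<in>{1..<k}. w r * A $$ (r,j)) + z * (if j = k-1 then 1 else 0)"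
  shows "det A = z * cofactor A 0 (k-1)"
proof -
  define H where "H v = mat k k (\<lambda>(i,j). if i = 0 then v j else A $$ (i,j))" for v
  have Hc: "H v \<in> carrier_mat k k" for v by (simp add: H_def)
  have del: "mat_delete (H v) 0 j = mat_delete A 0 j" for v j
    unfolding mat_delete_def H_def by (rule eq_matI) (use A in auto)
  have detH: "det (H v) = (\<Sum>j<k. v j * cofactor A 0 j)" for v
    using laplace_expansion_row[OF Hc k] unfolding cofactor_def del
    by (simp add: H_def k)
  have zero: "(\<Sum>j<k. A $$ (r,j) * cofactor A 0 j) = 0" if r: "r \<in> {1..<k}" for r
  proof -
    have "det (H (\<lambda>j. A $$ (r,j))) = 0"
      by (rule det_identical_rows[OF Hc, of 0 r]) (use r k in \<open>auto intro!: eq_vecI simp: H_def\<close>)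
    then show ?thesis using detH by simp
  qed
  have "det A = (\<Sum>j<k. A $$ (0,j) * cofactor A 0 j)"
    by (rule laplace_expansion_row[OF A k])
  also have "\<dots> = (\<Sum>j<k. (\<Sum>r\<in>{1..<k}. w r * A $$ (r,j)) * cofactor A 0 j)
      + (\<Sum>j<k. (if j = k-1 then z * cofactor A 0 j else 0))"
    unfolding sum.distrib[symmetric] by (rule sum.cong) (auto simp: row0 ring_distribs)
  also have "(\<Sum>j<k. (\<Sum>r\<in>{1..<k}. w r * A $$ (r,j)) * cofactor A 0 j)
      = (\<Sum>r\<in>{1..<k}. w r * (\<Sum>j<k. A $$ (r,j) * cofactor A 0 j))"
    unfolding sum_distrib_right sum_distrib_left by (subst sum.swap) (simp add: mult.assoc)
  also have "\<dots> = 0" using zero by simp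
  also have "(\<Sum>j<k. (if j = k-1 then z * cofactor A 0 j else 0)) = z * cofactor A 0 (k-1)"
    using k by (simp add: sum.delta)
  finally show ?thesis by simp
qed


lemma lam_delta0:
  fixes a b :: "nat \<Rightarrow> nat \<Rightarrow> complex"
  assumes a0: "a 0 0 = 0" and aN: "\<And>i j. i > N \<Longrightarrow> j \<le> i \<Longrightarrow> a i j = 0"
    and eig: "(\<Sum>i=1..N. coeff_poly a i * (pderiv ^^ i) (P_poly b m)) = smult l (P_poly b m)"
    and monic: "b m m = 1"
  shows "delta a m 0 = l"
proof -
  have "(\<Sum>s\<le>m. b m s * (if m \<le> s then delta a s (s - m) else 0)) = l * b m m"
    using eig_coeff[OF a0 aN eig order.refl] .
  moreover have "(\<Sum>s\<le>m. b m s * (if m \<le> s then delta a s (s - m) else 0))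
      = (\<Sum>s\<in>{m}. b m s * (if m \<le> s then delta a s (s - m) else 0))"
    by (rule sum.mono_neutral_right) auto
  ultimately show ?thesis using monic by simp
qed

lemma row0_identity:
  fixes a b :: "nat \<Rightarrow> nat \<Rightarrow> complex"
  assumes a0: "a 0 0 = 0" and aN: "\<And>i j. i > N \<Longrightarrow> j \<le> i \<Longrightarrow> a i j = 0"
    and eig: "\<And>n. (\<Sum>i=1..N. coeff_poly a i * (pderiv ^^ i) (P_poly b n)) = smult (lam n) (P_poly b n)"
    and monic: "\<And>m. b m m = 1"
    and bzero: "\<And>m l. l > m \<Longrightarrow> b m l = 0"
    and cK: "c \<le> K"
  shows "(lam m - lam (m + c)) * b (m + c) m = - (\<Sum>r=1..K. delta a (m + r) r * b (m + c) (m + r))"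
proof -
  define G where "G s = b (m + c) s * (if m \<le> s then delta a s (s - m) else 0)" for s
  have E: "(\<Sum>s\<le>m+c. G s) = lam (m + c) * b (m + c) m"
    unfolding G_def using eig_coeff[OF a0 aN eig le_add1] .
  have "(\<Sum>s\<le>m+c. G s) = (\<Sum>s\<le>m+K. G s)"
    by (rule sum.mono_neutral_left) (use cK bzero in \<open>auto simp: G_def\<close>)
  also have "\<dots> = (\<Sum>s\<in>{m..m+K}. G s)"
    by (rule sum.mono_neutral_right) (auto simp: G_def)
  also have "\<dots> = (\<Sum>r\<in>{0..K}. G (m + r))"
    by (rule sum.reindex_bij_witness[of _ "\<lambda>r. m + r" "\<lambda>s. s - m"]) auto
  also have "\<dots> = G m + (\<Sum>r\<in>{Suc 0..K}. G (m + r))"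
    using sum.atLeast_Suc_atMost[of 0 K "\<lambda>r. G (m + r)"] by simp
  also have "G m = b (m + c) m * lam m"
    using lam_delta0[OF a0 aN eig monic] by (simp add: G_def)
  also have "(\<Sum>r\<in>{Suc 0..K}. G (m + r)) = (\<Sum>r=1..K. delta a (m + r) r * b (m + c) (m + r))"
    by (rule sum.cong) (auto simp: G_def)
  finally show ?thesis using E by (simp add: algebra_simps)
qed

lemma Gmat_carrier: "Gmat lam b n k \<in> carrier_mat k k"
  by (simp add: Gmat_def)

lemma Gmat_index: "i < k \<Longrightarrow> j < k \<Longrightarrow> Gmat lam b n k $$ (i, j) =
     (if i = 0 then (lam (n - k) - lam (n - k + (j + 1))) * b (n - k + (j + 1)) (n - k)
     else b (n - k + (j + 1)) (n - k + i))"
  by (simp add: Gmat_def)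

lemma Gmat_minor:
  assumes monic: "\<And>m. b m m = 1" and bzero: "\<And>m l. l > m \<Longrightarrow> b m l = 0" and k: "k \<ge> 1"
  shows "det (mat_delete (Gmat lam b n k) 0 (k - 1)) = 1"
proof -
  let ?D = "mat_delete (Gmat lam b n k) 0 (k - 1)"
  have Dc: "?D \<in> carrier_mat (k - 1) (k - 1)"
    using mat_delete_carrier[OF Gmat_carrier] by blast
  have Dij: "?D $$ (i, j) = b (n - k + (j + 1)) (n - k + Suc i)" if "i < k - 1" "j < k - 1" for i j
    using that unfolding mat_delete_def by (simp add: Gmat_def)
  have ut: "upper_triangular ?D"
  proof -
    have "\<forall>i<k-1. \<forall>j<i. ?D $$ (i, j) = 0"
    proof (intro allI impI)
      fix i j assume "i < k - 1" "j < i"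
      then show "?D $$ (i, j) = 0" by (subst Dij) (auto intro: bzero)
    qed
    moreover have "dim_row ?D = k - 1" using Dc by (simp add: Gmat_def)
    ultimately show ?thesis unfolding upper_triangular_def by metis
  qed
  have "det ?D = prod_list (diag_mat ?D)" by (rule det_upper_triangular[OF ut Dc])
  also have "\<dots> = 1"
  proof (rule prod_list_ones)
    have dr: "dim_row ?D = k - 1" using Dc by (simp add: Gmat_def)
    show "\<forall>x\<in>set (diag_mat ?D). x = 1"
      unfolding diag_mat_def dr
    proof (clarsimp)
      fix x assume "x < k - Suc 0"
      then show "mat_delete (Gmat lam b n k) 0 (k - Suc 0) $$ (x, x) = 1" using Dij[of x x] monic by simp
    qed
  qed
  finally show ?thesis .
qed


theorem lemma2:
  fixes N :: nat and a :: "nat \<Rightarrow> nat \<Rightarrow> complex"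
    and lam :: "nat \<Rightarrow> complex" and b :: "nat \<Rightarrow> nat \<Rightarrow> complex"
  assumes N1: "N \<ge> 1"
    and a0: "coeff_poly a 0 = 0"
    and aN: "\<And>i. i > N \<Longrightarrow> coeff_poly a i = 0"
    and lam0: "lam 0 = 0"
    and lam_distinct: "\<And>n m. n \<ge> 1 \<Longrightarrow> m < n \<Longrightarrow> lam n \<noteq> lam m"
    and monic: "\<And>m. b m m = 1"
    and bzero: "\<And>m l. l > m \<Longrightarrow> b m l = 0"
    and eig: "\<And>n. (\<Sum>i=1..N. coeff_poly a i * (pderiv ^^ i) (P_poly b n))
                    = smult (lam n) (P_poly b n)"
  shows "\<forall>n\<ge>1. \<forall>k\<in>{1..n}. (-1) ^ k * delta a n k = det (Gmat lam b n k)"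
proof -
  have a0': "a 0 0 = 0" using arg_cong[OF a0, of "\<lambda>p. coeff p 0"] by (simp add: coeff_coeff_poly)
  have aN': "a i j = 0" if "i > N" "j \<le> i" for i j
    using arg_cong[OF aN[OF that(1)], of "\<lambda>p. coeff p j"] that(2) by (simp add: coeff_coeff_poly)
  show ?thesis
  proof (intro allI impI ballI)
    fix n k :: nat assume n: "n \<ge> 1" and k: "k \<in> {1..n}"
    define m where "m = n - k"
    have mk: "m + k = n" using k by (simp add: m_def)
    let ?A = "Gmat lam b n k"
    have row0: "?A $$ (0,j) = (\<Sum>r\<in>{1..<k}. (- delta a (m+r) r) * ?A $$ (r,j))
        + (- delta a n k) * (if j = k-1 then 1 else 0)" if j: "j < k" for j
    proof -
      define f where "f r = delta a (m + r) r * b (m + (j + 1)) (m + r)" for r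
      have jk: "j + 1 \<le> k" using j by simp
      have "?A $$ (0,j) = (lam m - lam (m + (j+1))) * b (m + (j+1)) m"
        using Gmat_index[OF _ j, of 0] j by (simp add: m_def)
      also have "\<dots> = - (\<Sum>r=1..k. f r)"
        unfolding f_def by (rule row0_identity[where N=N]) (use a0' aN' eig monic bzero jk in auto)
      also have "(\<Sum>r=1..k. f r) = (\<Sum>r\<in>{1..<k}. f r) + f k"
        using k by (simp add: atLeastLessThanSuc_atLeastAtMost[symmetric] sum.atLeastLessThan_Suc)
      also have "(\<Sum>r\<in>{1..<k}. f r) = (\<Sum>r\<in>{1..<k}. delta a (m+r) r * ?A $$ (r,j))"
        by (rule sum.cong) (use j in \<open>auto simp: f_def Gmat_index m_def\<close>)
      also have "f k = delta a n k * (if j = k-1 then 1 else 0)"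
      proof (cases "j = k - 1")
        case True then show ?thesis using k mk by (simp add: f_def monic)
      next
        case False then show ?thesis using j mk by (simp add: f_def bzero)
      qed
      finally show ?thesis by (simp add: sum_negf algebra_simps)
    qed
    have k0: "0 < k" using k by simp
    have "det ?A = (- delta a n k) * cofactor ?A 0 (k-1)"
      by (rule det_combo[OF Gmat_carrier k0 row0])
    also have "\<dots> = (- delta a n k) * (-1) ^ (k - 1)"
      unfolding cofactor_def using Gmat_minor[where b=b and k=k and lam=lam and n=n, OF monic bzero] k by simp
    also have "\<dots> = (-1) ^ k * delta a n k"
    proof -
      have "k = Suc (k - 1)" using k0 by simp
      then have "(-1::complex) ^ k = - ((-1) ^ (k - 1))" by (metis power_Suc mult_minus1)
      then show ?thesis by simp
    qed
    finally show "(-1) ^ k * delta a n k = det ?A" by simp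
  qed
qed

end
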